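(* Let $(Z,Z_{ac})$ be an accretive matrix-ordered vector space. Then there exists a $*$-closure $((V,V_{ac}),\phi)$ of $(Z,Z_{ac})$. Moreover, if $((V',V'_{ac}),\psi)$ is another $*$-closure of $(Z,Z_{ac})$, then there exists a real-complete order isomorphism $j:V\to V'$.
   Context: For a complex vector space $Z$, $M_n(Z)$ is the space of $n\times n$ matrices over $Z$. A cone is a set $C$ with $C+C\subseteq C$, $tC\subseteq C$ ($t\ge0$). A matrix cone is a sequence of cones $C_n\subseteq M_n(Z)$ with $X^*C_nX\subseteq C_k$ for all scalar $X\in M_{n,k}$; it is $\mathbb{C}$-proper if $C_1\cap-C_1\cap iC_1\cap-iC_1=\{0\}$, and then $(Z,Z_{ac})$, $Z_{ac}=\{Z_{ac}^n\}$, is an accretive matrix-ordered vector space, with $Z_{sa}^n=iZ_{ac}^n\cap-iZ_{ac}^n$ and $Z_+^n=Z_{sa}^n\cap Z_{ac}^n$. It is self-adjoint if $Z=\operatorname{span}_{\mathbb{C}}Z_{sa}^1$. In that case, each $M_n(Z)$ carries a unique conjugate-linear involution $*$ fixing every element of $Z_{sa}^n$, and it is given by $[z_{kl}]^*=[z_{lk}^*]$. A linear map $\phi$ is real-completely positive if $\phi^{(n)}(Z_{ac}^n)\subseteq W_{ac}^n$ for all $n$ ($\phi^{(n)}$ = entrywise application); a real-complete order embedding if injective and both $\phi$ and $\phi^{-1}$ (on the range) are real-completely positive; a real-complete order isomorphism if moreover surjective. A $*$-closure of $(Z,Z_{ac})$ is a pair $((V,V_{ac}),\phi)$ with $(V,V_{ac})$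 a self-adjoint accretive matrix-ordered vector space, $\phi:Z\to V$ a real-complete order embedding, and $V=\phi(Z)+\phi(Z)^*$ with respect to the involution of $V$. *)

theory Defs
  imports "HOL-Analysis.Analysis"
begin

text \<open>Complex vector spaces are given by an abelian group type together with a
scalar multiplication s :: complex => 'v => 'v satisfying vector_space s
(HOL.Vector_Spaces).  A space is a carrier V (a subspace) of such a type.\<close>

definition mats :: "nat \<Rightarrow> 'v::ab_group_add set \<Rightarrow> (nat \<Rightarrow> nat \<Rightarrow> 'v) set" where
  "mats n V = {A. (\<forall>i<n. \<forall>j<n. A i j \<in> V) \<and> (\<forall>i j. \<not> (i < n \<and> j < n) \<longrightarrow> A i j = 0)}"

definition smat :: "(complex \<Rightarrow> 'v \<Rightarrow> 'v) \<Rightarrow> complex \<Rightarrow> (nat \<Rightarrow> nat \<Rightarrow> 'v) \<Rightarrow> (nat \<Rightarrow> nat \<Rightarrow> 'v)" where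
  "smat s c A = (\<lambda>i j. s c (A i j))"

definition sset :: "(complex \<Rightarrow> 'v \<Rightarrow> 'v) \<Rightarrow> complex \<Rightarrow> (nat \<Rightarrow> nat \<Rightarrow> 'v) set \<Rightarrow> (nat \<Rightarrow> nat \<Rightarrow> 'v) set" where
  "sset s c S = smat s c ` S"

definition is_cone :: "(complex \<Rightarrow> 'v::ab_group_add \<Rightarrow> 'v) \<Rightarrow> (nat \<Rightarrow> nat \<Rightarrow> 'v) set \<Rightarrow> bool" where
  "is_cone s C \<longleftrightarrow> (\<forall>A\<in>C. \<forall>B\<in>C. (\<lambda>i j. A i j + B i j) \<in> C) \<and>
                    (\<forall>t::real. t \<ge> 0 \<longrightarrow> (\<forall>A\<in>C. smat s (complex_of_real t) A \<in> C))"

text \<open>X^* A X for A in M_n(V) and a scalar n x k matrix X (result in M_k(V)).\<close>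
definition congr :: "(complex \<Rightarrow> 'v::ab_group_add \<Rightarrow> 'v) \<Rightarrow> nat \<Rightarrow> nat \<Rightarrow> (nat \<Rightarrow> nat \<Rightarrow> complex)
    \<Rightarrow> (nat \<Rightarrow> nat \<Rightarrow> 'v) \<Rightarrow> (nat \<Rightarrow> nat \<Rightarrow> 'v)" where
  "congr s n k X A = (\<lambda>a b. if a < k \<and> b < k
      then (\<Sum>i<n. \<Sum>j<n. s (cnj (X i a) * X j b) (A i j)) else 0)"

definition matrix_cone :: "(complex \<Rightarrow> 'v::ab_group_add \<Rightarrow> 'v) \<Rightarrow> 'v set \<Rightarrow> (nat \<Rightarrow> (nat \<Rightarrow> nat \<Rightarrow> 'v) set) \<Rightarrow> bool" where
  "matrix_cone s V C \<longleftrightarrow>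
     (\<forall>n>0. C n \<subseteq> mats n V \<and> is_cone s (C n)) \<and>
     (\<forall>n>0. \<forall>k>0. \<forall>X. \<forall>A\<in>C n. congr s n k X A \<in> C k)"

definition C_proper :: "(complex \<Rightarrow> 'v::ab_group_add \<Rightarrow> 'v) \<Rightarrow> (nat \<Rightarrow> (nat \<Rightarrow> nat \<Rightarrow> 'v) set) \<Rightarrow> bool" where
  "C_proper s C \<longleftrightarrow>
     C 1 \<inter> sset s (-1) (C 1) \<inter> sset s \<i> (C 1) \<inter> sset s (-\<i>) (C 1) = {(\<lambda>i j. 0)}"

definition amovs :: "(complex \<Rightarrow> 'v::ab_group_add \<Rightarrow> 'v) \<Rightarrow> 'v set \<Rightarrow> (nat \<Rightarrow> (nat \<Rightarrow> nat \<Rightarrow> 'v) set) \<Rightarrow> bool" where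
  "amovs s V C \<longleftrightarrow> vector_space s \<and> module.subspace s V \<and> matrix_cone s V C \<and> C_proper s C"

definition sa_part :: "(complex \<Rightarrow> 'v::ab_group_add \<Rightarrow> 'v) \<Rightarrow> (nat \<Rightarrow> (nat \<Rightarrow> nat \<Rightarrow> 'v) set) \<Rightarrow> nat \<Rightarrow> (nat \<Rightarrow> nat \<Rightarrow> 'v) set" where
  "sa_part s C n = sset s \<i> (C n) \<inter> sset s (-\<i>) (C n)"

definition self_adjoint :: "(complex \<Rightarrow> 'v::ab_group_add \<Rightarrow> 'v) \<Rightarrow> 'v set \<Rightarrow> (nat \<Rightarrow> (nat \<Rightarrow> nat \<Rightarrow> 'v) set) \<Rightarrow> bool" where
  "self_adjoint s V C \<longleftrightarrow> V = module.span s {A 0 0 | A. A \<in> sa_part s C 1}"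

definition linear_on :: "(complex \<Rightarrow> 'v::ab_group_add \<Rightarrow> 'v) \<Rightarrow> (complex \<Rightarrow> 'w::ab_group_add \<Rightarrow> 'w) \<Rightarrow> 'v set \<Rightarrow> ('v \<Rightarrow> 'w) \<Rightarrow> bool" where
  "linear_on s1 s2 V f \<longleftrightarrow> (\<forall>x\<in>V. \<forall>y\<in>V. f (x + y) = f x + f y) \<and> (\<forall>c. \<forall>x\<in>V. f (s1 c x) = s2 c (f x))"

definition conj_linear_on :: "(complex \<Rightarrow> 'v::ab_group_add \<Rightarrow> 'v) \<Rightarrow> 'v set \<Rightarrow> ('v \<Rightarrow> 'v) \<Rightarrow> bool" where
  "conj_linear_on s V f \<longleftrightarrow> (\<forall>x\<in>V. \<forall>y\<in>V. f (x + y) = f x + f y) \<and> (\<forall>c. \<forall>x\<in>V. f (s c x) = s (cnj c) (f x))"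

definition map_mat :: "('v \<Rightarrow> 'w) \<Rightarrow> (nat \<Rightarrow> nat \<Rightarrow> 'v) \<Rightarrow> (nat \<Rightarrow> nat \<Rightarrow> 'w)" where
  "map_mat f A = (\<lambda>i j. f (A i j))"

definition real_cp :: "(nat \<Rightarrow> (nat \<Rightarrow> nat \<Rightarrow> 'v) set) \<Rightarrow> (nat \<Rightarrow> (nat \<Rightarrow> nat \<Rightarrow> 'w) set) \<Rightarrow> ('v \<Rightarrow> 'w) \<Rightarrow> bool" where
  "real_cp C D f \<longleftrightarrow> (\<forall>n>0. \<forall>A\<in>C n. map_mat f A \<in> D n)"

text \<open>Real-complete order embedding: linear, injective, real-completely positive, with
real-completely positive inverse on the range (range carrying the cones W_ac^n \<inter> M_n(f(V))).\<close>
definition rc_embedding :: "(complex \<Rightarrow> 'v::ab_group_add \<Rightarrow> 'v) \<Rightarrow> 'v set \<Rightarrow> (nat \<Rightarrow> (nat \<Rightarrow> nat \<Rightarrow> 'v) set)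
    \<Rightarrow> (complex \<Rightarrow> 'w::ab_group_add \<Rightarrow> 'w) \<Rightarrow> 'w set \<Rightarrow> (nat \<Rightarrow> (nat \<Rightarrow> nat \<Rightarrow> 'w) set) \<Rightarrow> ('v \<Rightarrow> 'w) \<Rightarrow> bool" where
  "rc_embedding s1 V C s2 W D f \<longleftrightarrow>
     linear_on s1 s2 V f \<and> f ` V \<subseteq> W \<and> inj_on f V \<and> real_cp C D f \<and>
     (\<forall>n>0. \<forall>A\<in>mats n V. map_mat f A \<in> D n \<longrightarrow> A \<in> C n)"

definition rc_isomorphism :: "(complex \<Rightarrow> 'v::ab_group_add \<Rightarrow> 'v) \<Rightarrow> 'v set \<Rightarrow> (nat \<Rightarrow> (nat \<Rightarrow> nat \<Rightarrow> 'v) set)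
    \<Rightarrow> (complex \<Rightarrow> 'w::ab_group_add \<Rightarrow> 'w) \<Rightarrow> 'w set \<Rightarrow> (nat \<Rightarrow> (nat \<Rightarrow> nat \<Rightarrow> 'w) set) \<Rightarrow> ('v \<Rightarrow> 'w) \<Rightarrow> bool" where
  "rc_isomorphism s1 V C s2 W D f \<longleftrightarrow> rc_embedding s1 V C s2 W D f \<and> f ` V = W"

text \<open>*-closure ((V,V_ac),phi) of (Z,Z_ac).  The involution of the self-adjoint space V
is the (unique, since V is spanned by V_sa^1) conjugate-linear map fixing V_sa^1.\<close>
definition star_closure :: "(complex \<Rightarrow> 'z::ab_group_add \<Rightarrow> 'z) \<Rightarrow> 'z set \<Rightarrow> (nat \<Rightarrow> (nat \<Rightarrow> nat \<Rightarrow> 'z) set)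
    \<Rightarrow> (complex \<Rightarrow> 'v::ab_group_add \<Rightarrow> 'v) \<Rightarrow> 'v set \<Rightarrow> (nat \<Rightarrow> (nat \<Rightarrow> nat \<Rightarrow> 'v) set) \<Rightarrow> ('z \<Rightarrow> 'v) \<Rightarrow> bool" where
  "star_closure sZ Z CZ sV V CV phi \<longleftrightarrow>
     amovs sV V CV \<and> self_adjoint sV V CV \<and> rc_embedding sZ Z CZ sV V CV phi \<and>
     (\<exists>star. conj_linear_on sV V star \<and> (\<forall>A\<in>sa_part sV CV 1. star (A 0 0) = A 0 0) \<and>
        V = {phi a + star (phi b) | a b. a \<in> Z \<and> b \<in> Z})"

end

theory Submission
  imports Defs "HOL-Library.Product_Plus" "HOL-Library.Function_Algebras"
begin

lemma sum_app: "(sum f I) x = sum (\<lambda>i. f i x) I"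
  by (induction I rule: infinite_finite_induct) auto

lemma dsum1: fixes n :: nat assumes "a < n" "b < n"
  shows "(\<Sum>k<n. \<Sum>l<n. if a = k \<and> b = l then f k l else (0::'a::comm_monoid_add)) = f a b"
proof -
  have "\<And>k. (\<Sum>l<n. if a = k \<and> b = l then f k l else 0) = (if a = k then f k b else 0)"
  proof -
    fix k
    have "(\<Sum>l<n. if a = k \<and> b = l then f k l else 0) = (\<Sum>l<n. if a = k then (if b = l then f k l else 0) else 0)"
      by (rule sum.cong) auto
    also have "\<dots> = (if a = k then f k b else 0)"
    proof (cases "a = k")
      case True
      have "(\<Sum>l<n. if b = l then f k l else 0) = f k b"
        by (subst sum.delta') (use assms(2) in auto)
      thus ?thesis using True by simp
    qed simp
    finally show "(\<Sum>l<n. if a = k \<and> b = l then f k l else 0) = (if a = k then f k b else 0)" .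
  qed
  hence "(\<Sum>k<n. \<Sum>l<n. if a = k \<and> b = l then f k l else (0::'a)) = (\<Sum>k<n. if a = k then f k b else 0)"
    by simp
  also have "\<dots> = f a b" using assms(1) by (simp add: sum.delta)
  finally show ?thesis .
qed

lemma dsum2: fixes n :: nat assumes "a < n" "b < n"
  shows "(\<Sum>k<n. \<Sum>l<n. if a = l \<and> b = k then f k l else (0::'a::comm_monoid_add)) = f b a"
  using dsum1[OF assms(2,1)] by (simp add: conj_commute)

definition M1 :: "'v::zero \<Rightarrow> nat \<Rightarrow> nat \<Rightarrow> 'v" where
  "M1 x = (\<lambda>i j. if i = 0 \<and> j = 0 then x else 0)"

definition Emat :: "nat \<Rightarrow> nat \<Rightarrow> 'v::zero \<Rightarrow> nat \<Rightarrow> nat \<Rightarrow> 'v" where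
  "Emat k l x = (\<lambda>i j. if i = k \<and> j = l then x else 0)"

lemma M1_add: "M1 (x + y) = M1 x + M1 (y::'v::monoid_add)"
  by (auto simp: M1_def fun_eq_iff)

lemma M1_inj: "M1 x = M1 y \<longleftrightarrow> x = y"
  by (metis M1_def)

locale amv =
  fixes s :: "complex \<Rightarrow> 'v::ab_group_add \<Rightarrow> 'v" and V :: "'v set"
    and C :: "nat \<Rightarrow> (nat \<Rightarrow> nat \<Rightarrow> 'v) set"
  assumes amv: "amovs s V C"
begin

lemma vs: "vector_space s" using amv by (simp add: amovs_def)

sublocale vs: vector_space s by (rule vs)

lemma subV: "vs.subspace V" using amv by (simp add: amovs_def)

lemma Csub: "n > 0 \<Longrightarrow> C n \<subseteq> mats n V"
  using amv by (simp add: amovs_def matrix_cone_def)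

lemma Cadd: "n > 0 \<Longrightarrow> A \<in> C n \<Longrightarrow> B \<in> C n \<Longrightarrow> A + B \<in> C n"
  using amv unfolding amovs_def matrix_cone_def is_cone_def plus_fun_def by blast

lemma Cscale: "n > 0 \<Longrightarrow> t \<ge> 0 \<Longrightarrow> A \<in> C n \<Longrightarrow> smat s (complex_of_real t) A \<in> C n"
  using amv unfolding amovs_def matrix_cone_def is_cone_def by blast

lemma Ccongr: "n > 0 \<Longrightarrow> k > 0 \<Longrightarrow> A \<in> C n \<Longrightarrow> congr s n k X A \<in> C k"
  using amv unfolding amovs_def matrix_cone_def by blast

lemma Cprop: "C_proper s C" using amv by (simp add: amovs_def)

lemma zero1: "(0::nat\<Rightarrow>nat\<Rightarrow>'v) \<in> C 1"
proof -
  have "(\<lambda>i j. 0::'v) \<in> C 1" using Cprop unfolding C_proper_def by blast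
  thus ?thesis by (simp add: zero_fun_def)
qed

lemma congr_zero: "congr s n k X 0 = 0"
  by (auto simp: congr_def fun_eq_iff)

lemma zeroC: "n > 0 \<Longrightarrow> 0 \<in> C n"
  using Ccongr[OF _ _ zero1, of n] congr_zero by fastforce

lemma Csum: "n > 0 \<Longrightarrow> (\<And>i. i \<in> I \<Longrightarrow> f i \<in> C n) \<Longrightarrow> sum f I \<in> C n"
proof (induction I rule: infinite_finite_induct)
  case (infinite A) thus ?case using zeroC by (metis sum.infinite)
next
  case empty thus ?case using zeroC by (metis sum.empty)
next
  case (insert x F)
  have "f x + sum f F \<in> C n" by (rule Cadd) (use insert in auto)
  thus ?case by (simp only: sum.insert[OF insert(1,2)])
qed

lemma smat_M1: "smat s c (M1 x) = M1 (s c x)"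
  by (auto simp: smat_def M1_def fun_eq_iff)

lemma smat_Emat: "smat s c (Emat k l x) = Emat k l (s c x)"
  by (auto simp: smat_def Emat_def fun_eq_iff)

lemma congr_M1: "congr s (Suc 0) n X (M1 x) = (\<lambda>a b. if a < n \<and> b < n then s (cnj (X 0 a) * X 0 b) x else 0)"
  by (auto simp: congr_def M1_def fun_eq_iff)

definition J where "J = {x. M1 x \<in> C 1 \<and> M1 (- x) \<in> C 1}"

lemma J_neg: "x \<in> J \<Longrightarrow> - x \<in> J" by (auto simp: J_def)
lemma J_add: assumes "x \<in> J" "y \<in> J" shows "x + y \<in> J"
proof -
  have "M1 x + M1 y \<in> C 1" "M1 (-x) + M1 (-y) \<in> C 1" using assms Cadd[of 1] by (auto simp: J_def)
  moreover have "- (x + y) = -x + -y" by simp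
  ultimately show ?thesis unfolding J_def by (simp only: M1_add mem_Collect_eq)
qed
lemma M1_0: "M1 0 = 0" by (auto simp: M1_def fun_eq_iff)
lemma J_zero: "0 \<in> J" using zero1 by (simp add: J_def M1_0)

lemma J_real: assumes "x \<in> J" shows "s (complex_of_real t) x \<in> J"
proof (cases "t \<ge> 0")
  case True
  have "M1 (s (complex_of_real t) x) \<in> C 1" "M1 (s (complex_of_real t) (-x)) \<in> C 1"
    using Cscale[of 1 t, OF _ True, of "M1 x"] Cscale[of 1 t, OF _ True, of "M1 (-x)"] assms by (auto simp: J_def smat_M1)
  thus ?thesis by (simp add: J_def vs.scale_minus_right)
next
  case False
  have "M1 (s (complex_of_real (-t)) x) \<in> C 1" "M1 (s (complex_of_real (-t)) (-x)) \<in> C 1"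
    using Cscale[of 1 "-t", of "M1 x"] Cscale[of 1 "-t", of "M1 (-x)"] False assms by (auto simp: J_def smat_M1)
  hence "M1 (s (complex_of_real t) (-x)) \<in> C 1" "M1 (s (complex_of_real t) x) \<in> C 1"
    by (simp_all add: vs.scale_minus_right vs.scale_minus_left)
  thus ?thesis by (simp add: J_def vs.scale_minus_right)
qed

lemma M1_V: "M1 x \<in> C 1 \<Longrightarrow> x \<in> V"
  using Csub[of 1] by (force simp: mats_def M1_def)

lemma Ediag: assumes "k < n" "M1 x \<in> C 1" shows "Emat k k x \<in> C n"
proof -
  let ?X = "\<lambda>(i::nat) (b::nat). if b = k then (1::complex) else 0"
  have "congr s (Suc 0) n ?X (M1 x) \<in> C n" using Ccongr[of 1 n] assms by simp
  moreover have "congr s (Suc 0) n ?X (M1 x) = Emat k k x"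
    unfolding congr_M1 using assms by (auto simp: Emat_def fun_eq_iff)
  ultimately show ?thesis by simp
qed

lemma Cadd3: "n > 0 \<Longrightarrow> A \<in> C n \<Longrightarrow> B \<in> C n \<Longrightarrow> D \<in> C n \<Longrightarrow> A + B + D \<in> C n"
  using Cadd by blast

lemma Tsym: assumes "k < n" "l < n" "m \<in> J" shows "Emat k l m + Emat l k m \<in> C n"
proof (cases "k = l")
  case True
  have "M1 (m + m) \<in> C 1" using J_add[OF assms(3) assms(3)] by (simp add: J_def)
  hence "Emat k k (m + m) \<in> C n" using Ediag assms by blast
  moreover have "Emat k k (m + m) = Emat k k m + Emat k k m" by (auto simp: Emat_def fun_eq_iff)
  ultimately show ?thesis using True by simp
next
  case False
  let ?X = "\<lambda>(i::nat) (b::nat). (if b = k then (1::complex) else 0) + (if b = l then 1 else 0)"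
  have "M1 m \<in> C 1" "M1 (-m) \<in> C 1" using assms by (auto simp: J_def)
  hence G: "congr s (Suc 0) n ?X (M1 m) \<in> C n" and E1: "Emat k k (-m) \<in> C n" and E2: "Emat l l (-m) \<in> C n"
    using Ccongr[of 1 n] Ediag assms by auto
  have n0: "n > 0" using assms by simp
  have "Emat k l m + Emat l k m = congr s (Suc 0) n ?X (M1 m) + Emat k k (-m) + Emat l l (-m)"
    unfolding congr_M1 using assms False by (auto simp: Emat_def fun_eq_iff)
  thus ?thesis using Cadd3[OF n0 G E1 E2] by simp
qed

lemma Tanti: assumes "k < n" "l < n" "s \<i> x \<in> J" shows "Emat k l x + Emat l k (- x) \<in> C n"
proof (cases "k = l")
  case True
  have "Emat k l x + Emat l k (- x) = 0" using True by (auto simp: Emat_def fun_eq_iff)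
  thus ?thesis using zeroC assms by simp
next
  case False
  let ?X = "\<lambda>(i::nat) (b::nat). (if b = k then (1::complex) else 0) + (if b = l then \<i> else 0)"
  let ?y = "- s \<i> x"
  have "M1 ?y \<in> C 1" "M1 (s \<i> x) \<in> C 1" using assms J_neg by (auto simp: J_def)
  hence G: "congr s (Suc 0) n ?X (M1 ?y) \<in> C n" and E1: "Emat k k (s \<i> x) \<in> C n" and E2: "Emat l l (s \<i> x) \<in> C n"
    using Ccongr[of 1 n] Ediag assms by auto
  have n0: "n > 0" using assms by simp
  have "Emat k l x + Emat l k (- x) = congr s (Suc 0) n ?X (M1 ?y) + Emat k k (s \<i> x) + Emat l l (s \<i> x)"
    unfolding congr_M1 using assms False
    by (auto simp: Emat_def fun_eq_iff vs.scale_minus_right vs.scale_scale)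
  thus ?thesis using Cadd3[OF n0 G E1 E2] by simp
qed

lemma half_double: "s (complex_of_real (1/2)) (x + x) = x"
proof -
  have "s (complex_of_real (1/2)) (x + x) = s (complex_of_real (1/2) + complex_of_real (1/2)) x"
    by (simp only: vs.scale_right_distrib vs.scale_left_distrib)
  also have "complex_of_real (1/2) + complex_of_real (1/2) = 1" by simp
  finally show ?thesis by (simp only: vs.scale_one)
qed

lemma sym_in: assumes n0: "n > 0" and sym: "\<And>k l. M k l = M l k" and inJ: "\<And>k l. k < n \<Longrightarrow> l < n \<Longrightarrow> M k l \<in> J"
  and out: "\<And>k l. \<not> (k < n \<and> l < n) \<Longrightarrow> M k l = 0"
  shows "M \<in> C n"
proof -
  let ?S = "\<Sum>k<n. \<Sum>l<n. Emat k l (M k l) + Emat l k (M k l)"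
  have "?S \<in> C n"
    by (intro Csum n0 Tsym inJ) auto
  from Cscale[OF n0 _ this, of "1/2"] have "smat s (complex_of_real (1/2)) ?S \<in> C n" by simp
  moreover have "smat s (complex_of_real (1/2)) ?S = M"
  proof (rule ext, rule ext)
    fix a b
    show "smat s (complex_of_real (1/2)) ?S a b = M a b"
    proof (cases "a < n \<and> b < n")
      case True
      have "?S a b = M a b + M b a"
      proof -
        have "?S a b = (\<Sum>k<n. \<Sum>l<n. (if a = k \<and> b = l then M k l else 0) + (if a = l \<and> b = k then M k l else 0))"
          by (simp only: sum_app plus_fun_apply Emat_def)
        also have "\<dots> = M a b + M b a"
          by (simp only: sum.distrib dsum1[OF True[THEN conjunct1] True[THEN conjunct2]] dsum2[OF True[THEN conjunct1] True[THEN conjunct2]])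
        finally show ?thesis .
      qed
      also have "\<dots> = M a b + M a b" using sym[of b a] by simp
      finally show ?thesis by (simp only: smat_def half_double)
    next
      case False
      have "?S a b = 0"
        using False by (simp only: sum_app plus_fun_apply Emat_def) (auto intro!: sum.neutral)
      thus ?thesis using False out by (simp add: smat_def)
    qed
  qed
  ultimately show ?thesis by simp
qed

lemma anti_in: assumes n0: "n > 0" and anti: "\<And>k l. M k l = - M l k" and inJ: "\<And>k l. k < n \<Longrightarrow> l < n \<Longrightarrow> s \<i> (M k l) \<in> J"
  and out: "\<And>k l. \<not> (k < n \<and> l < n) \<Longrightarrow> M k l = 0"
  shows "M \<in> C n"
proof -
  let ?S = "\<Sum>k<n. \<Sum>l<n. Emat k l (M k l) + Emat l k (- M k l)"
  have "?S \<in> C n"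
    by (intro Csum n0 Tanti inJ) auto
  from Cscale[OF n0 _ this, of "1/2"] have "smat s (complex_of_real (1/2)) ?S \<in> C n" by simp
  moreover have "smat s (complex_of_real (1/2)) ?S = M"
  proof (rule ext, rule ext)
    fix a b
    show "smat s (complex_of_real (1/2)) ?S a b = M a b"
    proof (cases "a < n \<and> b < n")
      case True
      have "?S a b = M a b + - M b a"
      proof -
        have "?S a b = (\<Sum>k<n. \<Sum>l<n. (if a = k \<and> b = l then M k l else 0) + (if a = l \<and> b = k then - M k l else 0))"
          by (simp only: sum_app plus_fun_apply Emat_def)
        also have "\<dots> = M a b + - M b a"
          by (simp only: sum.distrib dsum1[OF True[THEN conjunct1] True[THEN conjunct2]] dsum2[OF True[THEN conjunct1] True[THEN conjunct2]])
        finally show ?thesis .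
      qed
      also have "\<dots> = M a b + M a b" using anti[of a b] by simp
      finally show ?thesis by (simp only: smat_def half_double)
    next
      case False
      have "?S a b = 0"
        using False by (simp only: sum_app plus_fun_apply Emat_def) (auto intro!: sum.neutral)
      thus ?thesis using False out by (simp add: smat_def)
    qed
  qed
  ultimately show ?thesis by simp
qed

lemma sset_iff: assumes "c \<noteq> 0" shows "A \<in> sset s c S \<longleftrightarrow> smat s (inverse c) A \<in> S"
proof
  assume "A \<in> sset s c S"
  then obtain B where B: "B \<in> S" "A = smat s c B" by (auto simp: sset_def)
  have "smat s (inverse c) A = B" using assms by (auto simp: B smat_def fun_eq_iff)
  thus "smat s (inverse c) A \<in> S" using B by simp
next
  assume "smat s (inverse c) A \<in> S"
  moreover have "A = smat s c (smat s (inverse c) A)" using assms by (auto simp: smat_def fun_eq_iff)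
  ultimately show "A \<in> sset s c S" by (auto simp: sset_def)
qed

lemma J_iff: "x \<in> J \<longleftrightarrow> M1 x \<in> C 1 \<and> M1 (s (-1) x) \<in> C 1"
  by (simp add: J_def vs.scale_minus_left)

lemma zero_iff: "x = 0 \<longleftrightarrow> M1 x \<in> C 1 \<and> M1 (s (-1) x) \<in> C 1 \<and> M1 (s \<i> x) \<in> C 1 \<and> M1 (s (-\<i>) x) \<in> C 1"
proof
  assume "x = 0" thus "M1 x \<in> C 1 \<and> M1 (s (-1) x) \<in> C 1 \<and> M1 (s \<i> x) \<in> C 1 \<and> M1 (s (-\<i>) x) \<in> C 1"
    using zero1 by (simp add: M1_0)
next
  assume a: "M1 x \<in> C 1 \<and> M1 (s (-1) x) \<in> C 1 \<and> M1 (s \<i> x) \<in> C 1 \<and> M1 (s (-\<i>) x) \<in> C 1"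
  have "M1 x \<in> sset s (-1) (C 1)" "M1 x \<in> sset s \<i> (C 1)" "M1 x \<in> sset s (-\<i>) (C 1)"
    using a by (simp_all add: sset_iff smat_M1)
  hence "M1 x \<in> C 1 \<inter> sset s (-1) (C 1) \<inter> sset s \<i> (C 1) \<inter> sset s (-\<i>) (C 1)" using a by simp
  hence "M1 x = (\<lambda>i j. 0)" using Cprop unfolding C_proper_def by blast
  thus "x = 0" by (metis M1_def)
qed

lemma J_proper: "x \<in> J \<Longrightarrow> s \<i> x \<in> J \<Longrightarrow> x = 0"
  by (subst zero_iff) (auto simp: J_def vs.scale_minus_left)

definition SA where "SA = {A 0 0 | A. A \<in> sa_part s C 1}"

lemma SA_iff: "x \<in> SA \<longleftrightarrow> s \<i> x \<in> J"
proof
  assume "x \<in> SA"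
  then obtain A where A: "A \<in> sa_part s C 1" "x = A 0 0" by (auto simp: SA_def)
  have c1: "smat s (-\<i>) A \<in> C 1" "smat s \<i> A \<in> C 1"
    using A(1) by (auto simp: sa_part_def sset_iff)
  hence "smat s (-\<i>) A \<in> mats 1 V" using Csub[of 1] by auto
  hence "\<And>i j. \<not> (i = 0 \<and> j = 0) \<Longrightarrow> A i j = 0" by (auto simp: mats_def smat_def)
  hence AM: "A = M1 x" using A(2) by (auto simp: M1_def fun_eq_iff)
  show "s \<i> x \<in> J" using c1 unfolding AM smat_M1 J_def by (simp add: vs.scale_minus_left)
next
  assume "s \<i> x \<in> J"
  hence c1: "smat s (-\<i>) (M1 x) \<in> C 1" "smat s \<i> (M1 x) \<in> C 1"
    by (simp_all add: smat_M1 J_def vs.scale_minus_left)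
  hence "M1 x \<in> sa_part s C 1" by (simp add: sa_part_def sset_iff)
  moreover have "M1 x 0 0 = x" by (simp add: M1_def)
  ultimately show "x \<in> SA" unfolding SA_def by (metis (mono_tags, lifting) mem_Collect_eq)
qed

lemma SA_add: "x \<in> SA \<Longrightarrow> y \<in> SA \<Longrightarrow> x + y \<in> SA"
  by (simp add: SA_iff vs.scale_right_distrib J_add)
lemma SA_neg: "x \<in> SA \<Longrightarrow> - x \<in> SA"
  by (simp add: SA_iff vs.scale_minus_right J_neg)
lemma SA_zero: "0 \<in> SA" by (simp add: SA_iff J_zero)
lemma SA_real: "x \<in> SA \<Longrightarrow> s (complex_of_real t) x \<in> SA"
proof -
  assume "x \<in> SA"
  hence "s (complex_of_real t) (s \<i> x) \<in> J" by (simp only: SA_iff J_real)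
  moreover have "s (complex_of_real t) (s \<i> x) = s \<i> (s (complex_of_real t) x)" by (simp add: mult.commute)
  ultimately show ?thesis by (simp only: SA_iff)
qed
lemma SA_V: assumes "x \<in> SA" shows "x \<in> V"
proof -
  have "M1 (s \<i> x) \<in> C 1" using assms by (simp add: SA_iff J_def)
  hence "s \<i> x \<in> V" by (rule M1_V)
  hence "s (-\<i>) (s \<i> x) \<in> V" using subV vs.subspace_scale by blast
  thus ?thesis by (simp add: vs.scale_scale)
qed

lemma cplx_decomp: "c = complex_of_real (Re c) + \<i> * complex_of_real (Im c)"
  by (simp add: complex_eq_iff)

lemma span_SA: "vs.span SA = {h + s \<i> k | h k. h \<in> SA \<and> k \<in> SA}"
proof (rule vs.span_unique)
  show "SA \<subseteq> {h + s \<i> k | h k. h \<in> SA \<and> k \<in> SA}"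
    using SA_zero by force
  show "vs.subspace {h + s \<i> k | h k. h \<in> SA \<and> k \<in> SA}"
    unfolding vs.subspace_def
  proof safe
    show "\<exists>h k. 0 = h + s \<i> k \<and> h \<in> SA \<and> k \<in> SA" using SA_zero by force
  next
    fix h k h' k' assume "h \<in> SA" "k \<in> SA" "h' \<in> SA" "k' \<in> SA"
    thus "\<exists>h'' k''. h + s \<i> k + (h' + s \<i> k') = h'' + s \<i> k'' \<and> h'' \<in> SA \<and> k'' \<in> SA"
      by (intro exI[of _ "h + h'"] exI[of _ "k + k'"]) (auto simp: SA_add vs.scale_right_distrib)
  next
    fix c h k assume hk: "h \<in> SA" "k \<in> SA"
    let ?a = "complex_of_real (Re c)" and ?b = "complex_of_real (Im c)"
    have "s c (h + s \<i> k) = s (?a + \<i> * ?b) h + s ((?a + \<i> * ?b) * \<i>) k"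
      by (subst cplx_decomp) (simp add: vs.scale_right_distrib vs.scale_scale)
    also have "\<dots> = (s ?a h + s (-?b) k) + s \<i> (s ?b h + s ?a k)"
      by (simp add: vs.scale_right_distrib vs.scale_left_distrib vs.scale_scale algebra_simps)
    finally show "\<exists>h' k'. s c (h + s \<i> k) = h' + s \<i> k' \<and> h' \<in> SA \<and> k' \<in> SA"
      using hk by (intro exI[of _ "s ?a h + s (-?b) k"] exI[of _ "s ?b h + s ?a k"])
        (auto intro!: SA_add SA_real simp del: of_real_minus simp add: of_real_minus[symmetric])
  qed
next
  fix T assume "SA \<subseteq> T" "vs.subspace T"
  thus "{h + s \<i> k | h k. h \<in> SA \<and> k \<in> SA} \<subseteq> T"
    by (auto intro!: vs.subspace_add vs.subspace_scale)
qed

definition P0 where "P0 a b \<longleftrightarrow> M1 (a + b) \<in> C 1 \<and> M1 (s (-1) a + s (-1) b) \<in> C 1 \<and>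
   M1 (s \<i> a + s (-\<i>) b) \<in> C 1 \<and> M1 (s (-\<i>) a + s \<i> b) \<in> C 1"

end

lemma amv_star_closure: "star_closure sZ Z CZ sV V CV phi \<Longrightarrow> amv sV V CV"
  by (simp add: star_closure_def amv_def)

locale sclos = Z: amv sZ UNIV CZ for sZ :: "complex \<Rightarrow> 'z::ab_group_add \<Rightarrow> 'z" and CZ +
  fixes sV :: "complex \<Rightarrow> 'v::ab_group_add \<Rightarrow> 'v" and V CV and phi :: "'z \<Rightarrow> 'v"
  assumes sc: "star_closure sZ UNIV CZ sV V CV phi"
begin

sublocale W: amv sV V CV using sc by (rule amv_star_closure)

definition stP where "stP star \<longleftrightarrow> conj_linear_on sV V star \<and> (\<forall>A\<in>sa_part sV CV 1. star (A 0 0) = A 0 0) \<and>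
        V = {phi a + star (phi b) | a b. a \<in> UNIV \<and> b \<in> UNIV}"

definition st where "st = Eps stP"

lemma st_props: "conj_linear_on sV V st \<and> (\<forall>A\<in>sa_part sV CV 1. st (A 0 0) = A 0 0) \<and>
        V = {phi a + st (phi b) | a b. a \<in> UNIV \<and> b \<in> UNIV}"
proof -
  have "\<exists>star. stP star" using sc unfolding star_closure_def stP_def by blast
  hence "stP st" unfolding st_def by (rule someI_ex)
  thus ?thesis unfolding stP_def .
qed

lemma st_add: "x \<in> V \<Longrightarrow> y \<in> V \<Longrightarrow> st (x + y) = st x + st y"
  using st_props by (simp add: conj_linear_on_def)
lemma st_scale: "x \<in> V \<Longrightarrow> st (sV c x) = sV (cnj c) (st x)"
  using st_props by (simp add: conj_linear_on_def)
lemma st_SA: "x \<in> W.SA \<Longrightarrow> st x = x"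
  using st_props by (auto simp: W.SA_def)
lemma V_eq: "V = {phi a + st (phi b) | a b. True}"
  using st_props by simp

lemma self_adj: "V = W.vs.span W.SA"
  using sc by (simp add: star_closure_def self_adjoint_def W.SA_def)

lemma V_decomp: "x \<in> V \<Longrightarrow> \<exists>h k. h \<in> W.SA \<and> k \<in> W.SA \<and> x = h + sV \<i> k"
  using self_adj W.span_SA by auto

lemma emb: "rc_embedding sZ UNIV CZ sV V CV phi" using sc by (simp add: star_closure_def)

lemma phi_add: "phi (a + b) = phi a + phi b" using emb by (simp add: rc_embedding_def linear_on_def)
lemma phi_scale: "phi (sZ c a) = sV c (phi a)" using emb by (simp add: rc_embedding_def linear_on_def)
lemma phi_V: "phi a \<in> V" using emb by (auto simp: rc_embedding_def)
lemma phi_0: "phi 0 = 0" using phi_add[of 0 0] by simp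
lemma phi_neg: "phi (- a) = - phi a"
proof -
  have "phi a + phi (- a) = 0" using phi_add[of a "-a"] phi_0 by simp
  thus ?thesis by (metis minus_unique)
qed
lemma phi_cp: "n > 0 \<Longrightarrow> A \<in> CZ n \<Longrightarrow> map_mat phi A \<in> CV n"
  using emb by (simp add: rc_embedding_def real_cp_def)
lemma phi_refl: "n > 0 \<Longrightarrow> A \<in> mats n UNIV \<Longrightarrow> map_mat phi A \<in> CV n \<Longrightarrow> A \<in> CZ n"
  using emb by (simp add: rc_embedding_def)
lemma phi_inj: "phi a = phi b \<Longrightarrow> a = b"
  using emb by (simp add: rc_embedding_def inj_on_def)

lemma zeroV: "0 \<in> V" using W.subV W.vs.subspace_0 by blast
lemma st_0: "st 0 = 0" using st_add[OF zeroV zeroV] by simp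
lemma st_decomp: assumes "h \<in> W.SA" "k \<in> W.SA" shows "st (h + sV \<i> k) = h + sV (-\<i>) k"
proof -
  have hk: "h \<in> V" "k \<in> V" using assms W.SA_V by auto
  hence "sV \<i> k \<in> V" using W.subV W.vs.subspace_scale by blast
  hence "st (h + sV \<i> k) = st h + sV (cnj \<i>) (st k)" using hk st_add st_scale by simp
  thus ?thesis using assms st_SA by simp
qed

lemma decomp_fun: obtains H K where "\<And>b. H b \<in> W.SA" "\<And>b. K b \<in> W.SA" "\<And>b. phi b = H b + sV \<i> (K b)"
proof -
  have "\<forall>b. \<exists>hk. fst hk \<in> W.SA \<and> snd hk \<in> W.SA \<and> phi b = fst hk + sV \<i> (snd hk)"
    using V_decomp[OF phi_V] by fastforce
  then obtain f where "\<forall>b. fst (f b) \<in> W.SA \<and> snd (f b) \<in> W.SA \<and> phi b = fst (f b) + sV \<i> (snd (f b))"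
    by metis
  thus ?thesis using that[of "\<lambda>b. fst (f b)" "\<lambda>b. snd (f b)"] by blast
qed

lemma Dmat: assumes n0: "n > 0" and out: "\<And>k l. \<not> (k < n \<and> l < n) \<Longrightarrow> B k l = 0"
  shows "(\<lambda>k l. st (phi (B k l)) - phi (B l k)) \<in> CV n \<and> (\<lambda>k l. - (st (phi (B k l)) - phi (B l k))) \<in> CV n"
proof -
  obtain H K where HK: "\<And>b. H b \<in> W.SA" "\<And>b. K b \<in> W.SA" "\<And>b. phi b = H b + sV \<i> (K b)"
    using decomp_fun by blast
  define D1 where "D1 = (\<lambda>k l. if k < n \<and> l < n then H (B k l) - H (B l k) else 0)"
  define D2 where "D2 = (\<lambda>k l. if k < n \<and> l < n then - (sV \<i> (K (B k l)) + sV \<i> (K (B l k))) else 0)"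
  have SAdiff: "H a - H b \<in> W.SA" for a b
    unfolding diff_conv_add_uminus by (rule W.SA_add[OF HK(1) W.SA_neg[OF HK(1)]])
  have Jsum: "sV \<i> (K a) + sV \<i> (K b) \<in> W.J" for a b
    by (rule W.J_add) (simp_all only: W.SA_iff[symmetric] HK(2))
  have D1a: "D1 \<in> CV n" "(\<lambda>k l. - D1 k l) \<in> CV n"
    by (rule W.anti_in[OF n0]; auto simp: D1_def W.SA_iff[symmetric] SAdiff W.SA_neg)+
  have Jsum2: "- sV \<i> (K a) - sV \<i> (K b) \<in> W.J" for a b
    using W.J_neg[OF Jsum[of a b]] by simp
  have D2a: "D2 \<in> CV n" "(\<lambda>k l. - D2 k l) \<in> CV n"
    by (rule W.sym_in[OF n0]; auto simp: D2_def Jsum Jsum2 add.commute)+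
  have eq: "(\<lambda>k l. st (phi (B k l)) - phi (B l k)) = D1 + D2"
  proof (rule ext, rule ext)
    fix k l
    show "st (phi (B k l)) - phi (B l k) = (D1 + D2) k l"
    proof (cases "k < n \<and> l < n")
      case True
      have "st (phi (B k l)) = H (B k l) + sV (-\<i>) (K (B k l))"
        using st_decomp[OF HK(1) HK(2), of "B k l" "B k l"] HK(3)[of "B k l"] by simp
      hence "st (phi (B k l)) - phi (B l k) = H (B k l) + sV (-\<i>) (K (B k l)) - (H (B l k) + sV \<i> (K (B l k)))"
        using HK(3)[of "B l k"] by simp
      also have "\<dots> = (H (B k l) - H (B l k)) + - (sV \<i> (K (B k l)) + sV \<i> (K (B l k)))"
        by (simp add: W.vs.scale_minus_left algebra_simps)
      finally show ?thesis using True by (simp add: D1_def D2_def)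
    next
      case False
      thus ?thesis using out[OF False] out[of l k] by (auto simp: D1_def D2_def phi_0 st_0)
    qed
  qed
  have eq2: "(\<lambda>k l. - (st (phi (B k l)) - phi (B l k))) = (\<lambda>k l. - D1 k l) + (\<lambda>k l. - D2 k l)"
  proof -
    have "st (phi (B k l)) - phi (B l k) = D1 k l + D2 k l" for k l
      using fun_cong[OF fun_cong[OF eq, of k], of l] by simp
    thus ?thesis by (simp add: fun_eq_iff)
  qed
  show ?thesis unfolding eq2 unfolding eq using W.Cadd[OF n0 D1a(1) D2a(1)] W.Cadd[OF n0 D1a(2) D2a(2)] by (rule conjI)
qed

lemma KL: assumes n0: "n > 0" and out: "\<And>k l. \<not> (k < n \<and> l < n) \<Longrightarrow> A k l = 0 \<and> B k l = 0"
  shows "(\<lambda>k l. phi (A k l) + st (phi (B k l))) \<in> CV n \<longleftrightarrow> (\<lambda>k l. A k l + B l k) \<in> CZ n"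
proof -
  let ?D = "\<lambda>k l. st (phi (B k l)) - phi (B l k)"
  let ?Y = "map_mat phi (\<lambda>k l. A k l + B l k)"
  have D: "?D \<in> CV n" "(\<lambda>k l. - ?D k l) \<in> CV n" using Dmat[OF n0] out by blast+
  have mats: "(\<lambda>k l. A k l + B l k) \<in> mats n UNIV" using out by (auto simp: mats_def)
  have Y: "?Y \<in> CV n \<longleftrightarrow> (\<lambda>k l. A k l + B l k) \<in> CZ n"
    using phi_cp[OF n0] phi_refl[OF n0 mats] by blast
  have e1: "(\<lambda>k l. phi (A k l) + st (phi (B k l))) = ?Y + ?D"
    by (simp add: fun_eq_iff map_mat_def phi_add)
  have e2: "?Y = (\<lambda>k l. phi (A k l) + st (phi (B k l))) + (\<lambda>k l. - ?D k l)"
    by (simp add: fun_eq_iff map_mat_def phi_add)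
  show ?thesis
  proof
    assume "(\<lambda>k l. phi (A k l) + st (phi (B k l))) \<in> CV n"
    hence "?Y \<in> CV n" unfolding e2 using W.Cadd[OF n0] D(2) by blast
    thus "(\<lambda>k l. A k l + B l k) \<in> CZ n" using Y by blast
  next
    assume "(\<lambda>k l. A k l + B l k) \<in> CZ n"
    hence "?Y \<in> CV n" using Y by blast
    thus "(\<lambda>k l. phi (A k l) + st (phi (B k l))) \<in> CV n" unfolding e1 using W.Cadd[OF n0] D(1) by blast
  qed
qed

lemma st_phi_scale: "sV c (phi a + st (phi b)) = phi (sZ c a) + st (phi (sZ (cnj c) b))"
proof -
  have "st (phi (sZ (cnj c) b)) = sV c (st (phi b))"
    using phi_scale st_scale[OF phi_V] by simp
  thus ?thesis by (simp add: phi_scale W.vs.scale_right_distrib)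
qed

lemma L1: "M1 (phi a + st (phi b)) \<in> CV 1 \<longleftrightarrow> M1 (a + b) \<in> CZ 1"
proof -
  have e1: "(\<lambda>k l. phi (M1 a k l) + st (phi (M1 b k l))) = M1 (phi a + st (phi b))"
    by (auto simp: fun_eq_iff M1_def phi_0 st_0)
  have e2: "(\<lambda>k l. M1 a k l + M1 b l k) = M1 (a + b)"
    by (auto simp: fun_eq_iff M1_def)
  have out: "\<And>k l. \<not> (k < 1 \<and> l < 1) \<Longrightarrow> M1 a k l = 0 \<and> M1 b k l = 0" by (auto simp: M1_def)
  show ?thesis using KL[of 1 "M1 a" "M1 b", OF _ out] unfolding e1 e2 by simp
qed

lemma zero_char: "phi a + st (phi b) = 0 \<longleftrightarrow> Z.P0 a b"
proof -
  let ?x = "phi a + st (phi b)"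
  have "?x = 0 \<longleftrightarrow> M1 ?x \<in> CV 1 \<and> M1 (sV (-1) ?x) \<in> CV 1 \<and> M1 (sV \<i> ?x) \<in> CV 1 \<and> M1 (sV (-\<i>) ?x) \<in> CV 1"
    by (rule W.zero_iff)
  also have "\<dots> \<longleftrightarrow> Z.P0 a b"
    unfolding st_phi_scale L1 Z.P0_def by simp
  finally show ?thesis .
qed

lemma rep: "x \<in> V \<Longrightarrow> \<exists>a b. x = phi a + st (phi b)"
  using V_eq by auto

lemma rep_add: "(phi a + st (phi b)) + (phi a' + st (phi b')) = phi (a + a') + st (phi (b + b'))"
  by (simp add: phi_add st_add[OF phi_V phi_V] algebra_simps)

lemma rep_diff: "(phi a + st (phi b)) - (phi a' + st (phi b')) = phi (a - a') + st (phi (b - b'))"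
proof -
  have e: "phi (a - a') + st (phi (b - b')) + (phi a' + st (phi b')) = phi a + st (phi b)"
    by (simp only: rep_add diff_add_cancel)
  show ?thesis by (subst e[symmetric]) (simp only: add_diff_cancel_right')
qed

lemma rep_eq: "phi a + st (phi b) = phi a' + st (phi b') \<longleftrightarrow> Z.P0 (a - a') (b - b')"
proof -
  have "phi a + st (phi b) = phi a' + st (phi b') \<longleftrightarrow> (phi a + st (phi b)) - (phi a' + st (phi b')) = 0"
    by (rule right_minus_eq[symmetric])
  thus ?thesis unfolding rep_diff zero_char .
qed

lemma rep_in: "phi a + st (phi b) \<in> V"
  using V_eq by auto

definition rp where "rp x = (SOME p. x = phi (fst p) + st (phi (snd p)))"

lemma rp: "x \<in> V \<Longrightarrow> x = phi (fst (rp x)) + st (phi (snd (rp x)))"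
  unfolding rp_def by (rule someI_ex) (use rep in auto)

end

locale sclos2 = V: sclos sZ CZ sV V CV phi + W: sclos sZ CZ sW W CW psi
  for sZ :: "complex \<Rightarrow> 'z::ab_group_add \<Rightarrow> 'z" and CZ
  and sV :: "complex \<Rightarrow> 'v::ab_group_add \<Rightarrow> 'v" and V CV phi
  and sW :: "complex \<Rightarrow> 'w::ab_group_add \<Rightarrow> 'w" and W CW psi
begin

definition j where "j x = psi (fst (V.rp x)) + W.st (psi (snd (V.rp x)))"

lemma j_rep: "j (phi a + V.st (phi b)) = psi a + W.st (psi b)"
proof -
  let ?x = "phi a + V.st (phi b)"
  have "?x = phi (fst (V.rp ?x)) + V.st (phi (snd (V.rp ?x)))" using V.rp V.rep_in by blast
  hence "V.Z.P0 (fst (V.rp ?x) - a) (snd (V.rp ?x) - b)" using V.rep_eq[THEN iffD1, OF sym] by blast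
  hence "psi (fst (V.rp ?x)) + W.st (psi (snd (V.rp ?x))) = psi a + W.st (psi b)" by (rule W.rep_eq[THEN iffD2])
  thus ?thesis unfolding j_def .
qed

lemma j_0: "j 0 = 0"
  using j_rep[of 0 0] by (simp add: V.phi_0 V.st_0 W.phi_0 W.st_0)

lemma j_mat: assumes n0: "n > 0" and X: "X \<in> mats n V"
  obtains A B where "\<And>k l. \<not> (k < n \<and> l < n) \<Longrightarrow> A k l = 0 \<and> B k l = 0"
    "X = (\<lambda>k l. phi (A k l) + V.st (phi (B k l)))"
    "map_mat j X = (\<lambda>k l. psi (A k l) + W.st (psi (B k l)))"
proof -
  define A where "A = (\<lambda>k l. if k < n \<and> l < n then fst (V.rp (X k l)) else 0)"
  define B where "B = (\<lambda>k l. if k < n \<and> l < n then snd (V.rp (X k l)) else 0)"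
  have 1: "\<And>k l. \<not> (k < n \<and> l < n) \<Longrightarrow> A k l = 0 \<and> B k l = 0" unfolding A_def B_def by auto
  have 2: "X = (\<lambda>k l. phi (A k l) + V.st (phi (B k l)))"
  proof (rule ext, rule ext)
    fix k l show "X k l = phi (A k l) + V.st (phi (B k l))"
    proof (cases "k < n \<and> l < n")
      case True thus ?thesis using X V.rp[of "X k l"] by (simp add: A_def B_def mats_def)
    next
      case False
      hence "X k l = 0" "A k l = 0" "B k l = 0" using X by (auto simp: A_def B_def mats_def)
      thus ?thesis by (simp add: V.phi_0 V.st_0)
    qed
  qed
  have 3: "map_mat j X = (\<lambda>k l. psi (A k l) + W.st (psi (B k l)))"
    unfolding map_mat_def by (subst 2) (simp add: j_rep)
  show ?thesis using that[OF 1 2 3] by blast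
qed

lemma iso: "rc_isomorphism sV V CV sW W CW j"
proof -
  have lin: "linear_on sV sW V j"
    unfolding linear_on_def
  proof safe
    fix x y assume "x \<in> V" "y \<in> V"
    then obtain a b a' b' where "x = phi a + V.st (phi b)" "y = phi a' + V.st (phi b')" using V.rep by blast
    thus "j (x + y) = j x + j y" by (simp add: V.rep_add W.rep_add[symmetric] j_rep)
  next
    fix c x assume "x \<in> V"
    then obtain a b where "x = phi a + V.st (phi b)" using V.rep by blast
    thus "j (sV c x) = sW c (j x)" by (simp add: V.st_phi_scale W.st_phi_scale j_rep)
  qed
  have img: "j ` V = W"
  proof
    show "j ` V \<subseteq> W"
    proof
      fix y assume "y \<in> j ` V"
      then obtain x where "x \<in> V" "y = j x" by blast
      then obtain a b where "x = phi a + V.st (phi b)" using V.rep by blast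
      thus "y \<in> W" using \<open>y = j x\<close> j_rep W.rep_in by simp
    qed
  next
    show "W \<subseteq> j ` V"
    proof
      fix w assume "w \<in> W"
      then obtain a b where "w = psi a + W.st (psi b)" using W.rep by blast
      hence "w = j (phi a + V.st (phi b))" by (simp add: j_rep)
      thus "w \<in> j ` V" using V.rep_in by blast
    qed
  qed
  have inj: "inj_on j V"
  proof (rule inj_onI)
    fix x y assume "x \<in> V" "y \<in> V" "j x = j y"
    obtain a b a' b' where xy: "x = phi a + V.st (phi b)" "y = phi a' + V.st (phi b')"
      using V.rep \<open>x \<in> V\<close> \<open>y \<in> V\<close> by blast
    hence "psi a + W.st (psi b) = psi a' + W.st (psi b')" using \<open>j x = j y\<close> by (simp add: j_rep)
    hence "V.Z.P0 (a - a') (b - b')" by (rule W.rep_eq[THEN iffD1])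
    thus "x = y" unfolding xy by (rule V.rep_eq[THEN iffD2])
  qed
  have cp: "real_cp CV CW j"
    unfolding real_cp_def
  proof safe
    fix n X assume n0: "0 < n" and X: "X \<in> CV n"
    hence Xm: "X \<in> mats n V" using V.W.Csub by blast
    obtain A B where AB: "\<And>k l. \<not> (k < n \<and> l < n) \<Longrightarrow> A k l = 0 \<and> B k l = 0"
      "X = (\<lambda>k l. phi (A k l) + V.st (phi (B k l)))"
      "map_mat j X = (\<lambda>k l. psi (A k l) + W.st (psi (B k l)))"
      using j_mat[OF n0 Xm] by blast
    have "(\<lambda>k l. A k l + B l k) \<in> CZ n" using V.KL[OF n0 AB(1)] X AB(2) by simp
    thus "map_mat j X \<in> CW n" using W.KL[OF n0 AB(1)] AB(3) by simp
  qed
  have refl: "\<forall>n>0. \<forall>X\<in>mats n V. map_mat j X \<in> CW n \<longrightarrow> X \<in> CV n"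
  proof safe
    fix n X assume n0: "0 < n" and Xm: "X \<in> mats n V" and X: "map_mat j X \<in> CW n"
    obtain A B where AB: "\<And>k l. \<not> (k < n \<and> l < n) \<Longrightarrow> A k l = 0 \<and> B k l = 0"
      "X = (\<lambda>k l. phi (A k l) + V.st (phi (B k l)))"
      "map_mat j X = (\<lambda>k l. psi (A k l) + W.st (psi (B k l)))"
      using j_mat[OF n0 Xm] by blast
    have "(\<lambda>k l. A k l + B l k) \<in> CZ n" using W.KL[OF n0 AB(1)] X AB(3) by simp
    thus "X \<in> CV n" using V.KL[OF n0 AB(1)] AB(2) by simp
  qed
  show ?thesis unfolding rc_isomorphism_def rc_embedding_def
    using lin img inj cp refl by blast
qed

end

definition sP :: "(complex \<Rightarrow> 'z::ab_group_add \<Rightarrow> 'z) \<Rightarrow> complex \<Rightarrow> 'z \<times> 'z \<Rightarrow> 'z \<times> 'z" where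
  "sP s c p = (s c (fst p), s (cnj c) (snd p))"

context amv
begin

lemma vsP: "vector_space (sP s)"
  unfolding vector_space_def sP_def
  by (auto simp: vs.scale_right_distrib vs.scale_left_distrib prod_eq_iff)

definition NN where "NN = {p. fst p + snd p \<in> J \<and> s \<i> (fst p - snd p) \<in> J}"

lemma scale_decomp1: "s c a + s (cnj c) b = s (complex_of_real (Re c)) (a + b) + s (complex_of_real (Im c)) (s \<i> (a - b))"
proof -
  have "s c a + s (cnj c) b = s (complex_of_real (Re c) + \<i> * complex_of_real (Im c)) a + s (complex_of_real (Re c) - \<i> * complex_of_real (Im c)) b"
    by (metis cplx_decomp complex_cnj_add complex_cnj_mult complex_cnj_i complex_cnj_complex_of_real mult_minus_left diff_conv_add_uminus)
  also have "\<dots> = s (complex_of_real (Re c)) (a + b) + s (complex_of_real (Im c)) (s \<i> (a - b))"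
    by (simp add: vs.scale_right_distrib vs.scale_left_distrib vs.scale_right_diff_distrib vs.scale_left_diff_distrib algebra_simps)
  finally show ?thesis .
qed

lemma scale_decomp2: "s \<i> (s c a - s (cnj c) b) = s (complex_of_real (Re c)) (s \<i> (a - b)) + s (complex_of_real (- Im c)) (a + b)"
proof -
  have "s \<i> (s c a - s (cnj c) b) = s \<i> (s (complex_of_real (Re c) + \<i> * complex_of_real (Im c)) a - s (complex_of_real (Re c) - \<i> * complex_of_real (Im c)) b)"
    by (metis cplx_decomp complex_cnj_add complex_cnj_mult complex_cnj_i complex_cnj_complex_of_real mult_minus_left diff_conv_add_uminus)
  also have "\<dots> = s (complex_of_real (Re c)) (s \<i> (a - b)) + s (complex_of_real (- Im c)) (a + b)"
    by (simp add: vs.scale_right_distrib vs.scale_left_distrib vs.scale_right_diff_distrib vs.scale_left_diff_distrib algebra_simps)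
  finally show ?thesis .
qed

lemma NN_sub: "module.subspace (sP s) NN"
proof -
  interpret P: vector_space "sP s" by (rule vsP)
  show ?thesis unfolding P.subspace_def
  proof safe
    show "0 \<in> NN" by (simp add: NN_def J_zero)
  next
    fix x y assume xy: "x \<in> NN" "y \<in> NN"
    have e1: "fst (x + y) + snd (x + y) = (fst x + snd x) + (fst y + snd y)" by (simp add: algebra_simps)
    have e2: "s \<i> (fst (x + y) - snd (x + y)) = s \<i> (fst x - snd x) + s \<i> (fst y - snd y)"
      by (simp add: algebra_simps vs.scale_right_distrib vs.scale_right_diff_distrib)
    have "fst (x + y) + snd (x + y) \<in> J" unfolding e1 by (rule J_add) (use xy in \<open>auto simp: NN_def\<close>)
    moreover have "s \<i> (fst (x + y) - snd (x + y)) \<in> J" unfolding e2 by (rule J_add) (use xy in \<open>auto simp: NN_def\<close>)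
    ultimately show "x + y \<in> NN" unfolding NN_def by blast
  next
    fix c x assume x: "x \<in> NN"
    show "sP s c x \<in> NN"
      unfolding NN_def sP_def using x
      by (auto simp only: NN_def mem_Collect_eq fst_conv snd_conv scale_decomp1 scale_decomp2 intro!: J_add J_real)
  qed
qed

lemma NN_swap: "p \<in> NN \<Longrightarrow> (snd p, fst p) \<in> NN"
proof -
  assume "p \<in> NN"
  hence "fst p + snd p \<in> J" "s \<i> (fst p - snd p) \<in> J" by (auto simp: NN_def)
  moreover have "s \<i> (snd p - fst p) = - s \<i> (fst p - snd p)"
    by (metis minus_diff_eq vs.scale_minus_right)
  ultimately show ?thesis by (auto simp: NN_def add.commute J_neg)
qed

lemma exP: "\<exists>P. Vector_Spaces.linear (sP s) (sP s) P \<and> (\<forall>x. x - P x \<in> NN) \<and> (\<forall>x\<in>NN. P x = 0)"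
proof -
  interpret P: vector_space "sP s" by (rule vsP)
  interpret PP: vector_space_pair "sP s" "sP s" by unfold_locales
  obtain B where B: "B \<subseteq> NN" "P.independent B" "NN \<subseteq> P.span B"
    using P.maximal_independent_subset by blast
  let ?B' = "P.extend_basis B"
  have B': "B \<subseteq> ?B'" "P.independent ?B'" "P.span ?B' = UNIV"
    using P.extend_basis_superset P.independent_extend_basis P.span_extend_basis B(2) by auto
  obtain P where P: "Vector_Spaces.linear (sP s) (sP s) P" "\<forall>x\<in>?B'. P x = (if x \<in> B then 0 else x)"
    using PP.linear_independent_extend[OF B'(2), of "\<lambda>x. if x \<in> B then 0 else x"] by blast
  have lQ: "Vector_Spaces.linear (sP s) (sP s) (\<lambda>x. x - P x)"
    using PP.linear_compose_sub[OF P.module_hom_ident P(1)] by simp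
  have Q: "x - P x \<in> NN" for x
  proof -
    have "x \<in> P.span ?B'" using B'(3) by simp
    thus ?thesis
    proof (induction rule: P.span_induct)
      case base
      show ?case using PP.linear_subspace_vimage[OF lQ NN_sub] by (simp add: vimage_def)
    next
      case (step x)
      show ?case
      proof (cases "x \<in> B")
        case True thus ?thesis using P(2) step B(1) by auto
      next
        case False thus ?thesis using P(2) step P.subspace_0[OF NN_sub] by auto
      qed
    qed
  qed
  have Z: "P x = 0" if "x \<in> NN" for x
  proof (rule PP.linear_eq_on[OF P(1) PP.linear_zero, of x B])
    show "x \<in> P.span B" using that B(3) by blast
    fix b assume "b \<in> B" thus "P b = 0" using B'(1) P(2) by auto
  qed
  show ?thesis using P(1) Q Z by blast
qed

end

lemma sset_iff_gen: assumes "vector_space s" "c \<noteq> 0" shows "A \<in> sset s c S \<longleftrightarrow> smat s (inverse c) A \<in> S"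
proof -
  interpret vector_space s by fact
  show ?thesis
  proof
    assume "A \<in> sset s c S"
    then obtain B where B: "B \<in> S" "A = smat s c B" by (auto simp: sset_def)
    have "smat s (inverse c) A = B" using assms by (auto simp: B smat_def fun_eq_iff)
    thus "smat s (inverse c) A \<in> S" using B by simp
  next
    assume "smat s (inverse c) A \<in> S"
    moreover have "A = smat s c (smat s (inverse c) A)" using assms by (auto simp: smat_def fun_eq_iff)
    ultimately show "A \<in> sset s c S" by (auto simp: sset_def)
  qed
qed

lemma smat_M1_gen: assumes "vector_space f" shows "smat f c (M1 x) = M1 (f c x)"
proof -
  interpret vector_space f by fact
  show ?thesis by (auto simp: smat_def M1_def fun_eq_iff)
qed

definition trm :: "(nat \<Rightarrow> nat \<Rightarrow> 'z \<times> 'z) \<Rightarrow> nat \<Rightarrow> nat \<Rightarrow> 'z::ab_group_add" where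
  "trm X = (\<lambda>k l. fst (X k l) + snd (X l k))"

locale exi = amv s UNIV C for s :: "complex \<Rightarrow> 'z::ab_group_add \<Rightarrow> 'z" and C +
  fixes P :: "'z \<times> 'z \<Rightarrow> 'z \<times> 'z"
  assumes linP: "Vector_Spaces.linear (sP s) (sP s) P"
    and PQ: "\<And>x. x - P x \<in> NN"
    and PZ: "\<And>x. x \<in> NN \<Longrightarrow> P x = 0"
begin

sublocale Pv: vector_space "sP s" by (rule vsP)
sublocale PP: vector_space_pair "sP s" "sP s" by unfold_locales

lemma P_add: "P (x + y) = P x + P y" using linP by (simp add: PP.linear_add)
lemma P_scale: "P (sP s c x) = sP s c (P x)" using linP by (simp add: PP.linear_scale)
lemma P_0: "P 0 = 0" using linP by (simp add: PP.linear_0)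
lemma P_neg: "P (- x) = - P x" using linP by (simp add: PP.linear_neg)
lemma P_diff: "P (x - y) = P x - P y" using linP by (simp add: PP.linear_diff)
lemma P_idem: "P (P x) = P x"
proof -
  have "P (x - P x) = 0" using PZ PQ by blast
  thus ?thesis by (simp add: P_diff)
qed

definition K where "K = range P"
definition CVx where "CVx n = {X \<in> mats n K. trm X \<in> C n}"
definition phi where "phi a = P (a, 0)"
definition star where "star x = P (snd x, fst x)"

lemma K_sub: "Pv.subspace K" unfolding K_def using PP.linear_subspace_image[OF linP Pv.subspace_UNIV] .
lemma K_P: "x \<in> K \<Longrightarrow> P x = x" unfolding K_def using P_idem by auto
lemma P_K: "P x \<in> K" unfolding K_def by simp
lemma NK: "x \<in> NN \<Longrightarrow> x \<in> K \<Longrightarrow> x = 0" using PZ K_P by metis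
lemma zeroK: "0 \<in> K" using P_K P_0 by metis

lemma P0_NN: "P0 a b \<longleftrightarrow> (a, b) \<in> NN"
proof -
  have e1: "s (-1) a + s (-1) b = - (a + b)" by (simp add: vs.scale_minus_left)
  have e2: "s \<i> a + s (-\<i>) b = s \<i> (a - b)" by (simp add: vs.scale_minus_left vs.scale_right_diff_distrib)
  have e3: "s (-\<i>) a + s \<i> b = - s \<i> (a - b)" by (simp add: vs.scale_minus_left vs.scale_right_diff_distrib)
  show ?thesis unfolding P0_def e1 e2 e3 NN_def J_def by simp
qed

lemma trm_M1: "trm (M1 x) = M1 (fst x + snd x)"
  by (auto simp: trm_def M1_def fun_eq_iff)

lemma M1_CVx: "M1 x \<in> CVx 1 \<longleftrightarrow> x \<in> K \<and> M1 (fst x + snd x) \<in> C 1"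
proof -
  have "M1 x \<in> mats 1 K \<longleftrightarrow> x \<in> K" using zeroK by (auto simp: mats_def M1_def)
  thus ?thesis by (simp add: CVx_def trm_M1)
qed

lemma Ntr: assumes n0: "n > 0" and inN: "\<And>k l. Nm k l \<in> NN" and out: "\<And>k l. \<not> (k < n \<and> l < n) \<Longrightarrow> Nm k l = 0"
  shows "trm Nm \<in> C n"
proof -
  define U where "U = (\<lambda>k l. fst (Nm k l) + snd (Nm k l))"
  define Wd where "Wd = (\<lambda>k l. fst (Nm k l) - snd (Nm k l))"
  have UJ: "U k l \<in> J" for k l using inN[of k l] by (simp add: U_def NN_def)
  have WJ: "s \<i> (Wd k l) \<in> J" for k l using inN[of k l] by (simp add: Wd_def NN_def)
  define S1 where "S1 = (\<lambda>k l. U k l + U l k)"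
  define S2 where "S2 = (\<lambda>k l. Wd k l - Wd l k)"
  have S1C: "S1 \<in> C n"
  proof (rule sym_in[OF n0])
    show "S1 k l = S1 l k" for k l by (simp add: S1_def add.commute)
    show "S1 k l \<in> J" for k l unfolding S1_def by (rule J_add[OF UJ UJ])
    show "S1 k l = 0" if "\<not> (k < n \<and> l < n)" for k l using that out[of k l] out[of l k] by (auto simp: S1_def U_def)
  qed
  have S2J: "s \<i> (S2 k l) \<in> J" for k l
  proof -
    have "s \<i> (S2 k l) = s \<i> (Wd k l) + - s \<i> (Wd l k)"
      by (simp add: S2_def vs.scale_right_diff_distrib)
    thus ?thesis using J_add[OF WJ J_neg[OF WJ]] by simp
  qed
  have S2C: "S2 \<in> C n"
    by (rule anti_in[OF n0]) (auto simp: S2_def Wd_def out S2J[unfolded S2_def Wd_def])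
  have "smat s (complex_of_real (1/2)) (S1 + S2) \<in> C n"
    using Cscale[OF n0 _ Cadd[OF n0 S1C S2C], of "1/2"] by simp
  moreover have "smat s (complex_of_real (1/2)) (S1 + S2) = trm Nm"
  proof (rule ext, rule ext)
    fix k l
    have "(S1 + S2) k l = trm Nm k l + trm Nm k l"
      by (simp add: S1_def S2_def U_def Wd_def trm_def algebra_simps)
    thus "smat s (complex_of_real (1/2)) (S1 + S2) k l = trm Nm k l"
      by (simp only: smat_def half_double)
  qed
  ultimately show ?thesis by simp
qed

lemma sP_fst[simp]: "fst (sP s c x) = s c (fst x)" by (simp add: sP_def)
lemma sP_snd[simp]: "snd (sP s c x) = s (cnj c) (snd x)" by (simp add: sP_def)

lemma CVx_add: assumes "A \<in> CVx n" "B \<in> CVx n" "n > 0" shows "(\<lambda>i j. A i j + B i j) \<in> CVx n"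
proof -
  have m: "(\<lambda>i j. A i j + B i j) \<in> mats n K"
    using assms Pv.subspace_add[OF K_sub] by (auto simp: CVx_def mats_def)
  have "trm (\<lambda>i j. A i j + B i j) = trm A + trm B" by (simp add: trm_def fun_eq_iff algebra_simps)
  hence "trm (\<lambda>i j. A i j + B i j) \<in> C n" using Cadd[OF assms(3)] assms by (simp add: CVx_def)
  thus ?thesis using m by (simp add: CVx_def)
qed

lemma CVx_scale: assumes "A \<in> CVx n" "n > 0" "t \<ge> 0" shows "smat (sP s) (complex_of_real t) A \<in> CVx n"
proof -
  have m: "smat (sP s) (complex_of_real t) A \<in> mats n K"
    using assms Pv.subspace_scale[OF K_sub] by (auto simp: CVx_def mats_def smat_def)
  have "trm (smat (sP s) (complex_of_real t) A) = smat s (complex_of_real t) (trm A)"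
    by (simp add: trm_def fun_eq_iff smat_def vs.scale_right_distrib)
  hence "trm (smat (sP s) (complex_of_real t) A) \<in> C n" using Cscale[OF assms(2,3)] assms(1) by (simp add: CVx_def)
  thus ?thesis using m by (simp add: CVx_def)
qed

lemma trm_congr: "trm (congr (sP s) n k X A) = congr s n k X (trm A)"
proof (rule ext, rule ext)
  fix a b
  show "trm (congr (sP s) n k X A) a b = congr s n k X (trm A) a b"
  proof (cases "a < k \<and> b < k")
    case True
    have e: "(\<Sum>i<n. \<Sum>j<n. s (X i b * cnj (X j a)) (snd (A i j))) = (\<Sum>i<n. \<Sum>j<n. s (cnj (X i a) * X j b) (snd (A j i)))"
      by (rule trans[OF sum.swap]) (simp add: mult.commute)
    show ?thesis using True
      by (simp add: trm_def congr_def fst_sum snd_sum e vs.scale_right_distrib sum.distrib)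
  next
    case False thus ?thesis by (auto simp: trm_def congr_def)
  qed
qed

lemma CVx_congr: assumes "A \<in> CVx n" "n > 0" "k > 0" shows "congr (sP s) n k X A \<in> CVx k"
proof -
  have "congr (sP s) n k X A \<in> mats k K"
    using assms by (auto simp: CVx_def mats_def congr_def intro!: Pv.subspace_sum[OF K_sub] Pv.subspace_scale[OF K_sub])
  moreover have "trm (congr (sP s) n k X A) \<in> C k"
    unfolding trm_congr using Ccongr assms by (simp add: CVx_def)
  ultimately show ?thesis by (simp add: CVx_def)
qed

lemma CVx_zero: "(\<lambda>i j. 0) \<in> CVx 1"
  using M1_CVx[of 0] zeroK M1_0 zero1 by (simp add: M1_def zero_fun_def)

lemma amovs_x: "amovs (sP s) K CVx"
  unfolding amovs_def
proof (intro conjI)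
  show "vector_space (sP s)" by (rule vsP)
  show "Pv.subspace K" by (rule K_sub)
  show "matrix_cone (sP s) K CVx"
    unfolding matrix_cone_def is_cone_def
  proof (intro conjI allI impI ballI)
    fix n :: nat assume "n > 0"
    thus "CVx n \<subseteq> mats n K" by (auto simp: CVx_def)
    fix A B assume "A \<in> CVx n" "B \<in> CVx n"
    thus "(\<lambda>i j. A i j + B i j) \<in> CVx n" using CVx_add \<open>n > 0\<close> by blast
  next
    fix n :: nat and t :: real and A assume "n > 0" "0 \<le> t" "A \<in> CVx n"
    thus "smat (sP s) (complex_of_real t) A \<in> CVx n" using CVx_scale by blast
  next
    fix n k :: nat and X A assume "n > 0" "k > 0" "A \<in> CVx n"
    thus "congr (sP s) n k X A \<in> CVx k" using CVx_congr by blast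
  qed
  show "C_proper (sP s) CVx"
    unfolding C_proper_def
  proof
    show "{\<lambda>i j. 0} \<subseteq> CVx 1 \<inter> sset (sP s) (- 1) (CVx 1) \<inter> sset (sP s) \<i> (CVx 1) \<inter> sset (sP s) (- \<i>) (CVx 1)"
      using CVx_zero by (simp add: sset_iff_gen[OF vsP] smat_def)
  next
    show "CVx 1 \<inter> sset (sP s) (- 1) (CVx 1) \<inter> sset (sP s) \<i> (CVx 1) \<inter> sset (sP s) (- \<i>) (CVx 1) \<subseteq> {\<lambda>i j. 0}"
    proof
      fix A assume A: "A \<in> CVx 1 \<inter> sset (sP s) (- 1) (CVx 1) \<inter> sset (sP s) \<i> (CVx 1) \<inter> sset (sP s) (- \<i>) (CVx 1)"
      hence "A \<in> mats 1 K" by (simp add: CVx_def)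
      hence "A = M1 (A 0 0)" by (auto simp: mats_def M1_def fun_eq_iff)
      then obtain x where AM: "A = M1 x" by blast
      have f: "M1 x \<in> CVx 1" "M1 (- x) \<in> CVx 1" "M1 (sP s \<i> x) \<in> CVx 1" "M1 (- sP s \<i> x) \<in> CVx 1"
        using A unfolding AM by (simp_all add: sset_iff_gen[OF vsP] smat_M1_gen[OF vsP])
      hence "x \<in> K" "P0 (fst x) (snd x)"
        unfolding M1_CVx P0_def by simp_all
      hence "x = 0" using NK P0_NN by (metis prod.collapse)
      thus "A \<in> {\<lambda>i j. 0}" using AM by (simp add: M1_def)
    qed
  qed
qed

sublocale Kx: amv "sP s" K CVx using amovs_x by (simp add: amv_def)

lemma sPi_K: "sP s \<i> x \<in> K \<longleftrightarrow> x \<in> K"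
proof
  assume "sP s \<i> x \<in> K"
  hence "sP s (-\<i>) (sP s \<i> x) \<in> K" using Pv.subspace_scale[OF K_sub] by blast
  thus "x \<in> K" by simp
qed (use Pv.subspace_scale[OF K_sub] in blast)

lemma SAx: "x \<in> Kx.SA \<longleftrightarrow> x \<in> K \<and> s \<i> (fst x - snd x) \<in> J"
proof -
  have e1: "fst (sP s \<i> x) + snd (sP s \<i> x) = s \<i> (fst x - snd x)"
    by (simp add: vs.scale_right_diff_distrib)
  have e2: "fst (- sP s \<i> x) + snd (- sP s \<i> x) = - s \<i> (fst x - snd x)"
    by (simp add: vs.scale_right_diff_distrib)
  have k2: "- sP s \<i> x \<in> K \<longleftrightarrow> x \<in> K"
    using sPi_K Pv.subspace_neg[OF K_sub] by (metis minus_minus)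
  show ?thesis
    unfolding Kx.SA_iff Kx.J_def mem_Collect_eq M1_CVx e1 e2 k2 sPi_K J_def by blast
qed

lemma half_split: "s (complex_of_real (1/2)) (a + b) + s (complex_of_real (1/2)) (a - b) = a"
  "s (complex_of_real (1/2)) (a + b) - s (complex_of_real (1/2)) (a - b) = b"
proof -
  have "s (complex_of_real (1/2)) (a + b) + s (complex_of_real (1/2)) (a - b) = s (complex_of_real (1/2)) (a + a)"
    by (simp only: vs.scale_right_distrib[symmetric]) (simp add: algebra_simps)
  thus "s (complex_of_real (1/2)) (a + b) + s (complex_of_real (1/2)) (a - b) = a" by (simp only: half_double)
  have "s (complex_of_real (1/2)) (a + b) - s (complex_of_real (1/2)) (a - b) = s (complex_of_real (1/2)) (b + b)"
    by (simp only: vs.scale_right_diff_distrib[symmetric]) (simp add: algebra_simps)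
  thus "s (complex_of_real (1/2)) (a + b) - s (complex_of_real (1/2)) (a - b) = b" by (simp only: half_double)
qed

lemma Pdiag_SA: "P (y, y) \<in> Kx.SA"
proof -
  define n where "n = (y, y) - P (y, y)"
  have nN: "n \<in> NN" unfolding n_def by (rule PQ)
  have "fst (P (y, y)) - snd (P (y, y)) = - (fst n - snd n)" by (simp add: n_def algebra_simps)
  hence "s \<i> (fst (P (y, y)) - snd (P (y, y))) = - s \<i> (fst n - snd n)" by (metis vs.scale_minus_right)
  moreover have "s \<i> (fst n - snd n) \<in> J" using nN by (simp add: NN_def)
  ultimately show ?thesis using SAx P_K J_neg by simp
qed

lemma selfadj_x: "self_adjoint (sP s) K CVx"
  unfolding self_adjoint_def Kx.SA_def[symmetric]
proof
  show "Pv.span Kx.SA \<subseteq> K"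
    by (rule Pv.span_minimal) (use SAx K_sub in auto)
next
  show "K \<subseteq> Pv.span Kx.SA"
  proof
    fix x assume x: "x \<in> K"
    define a b where "a = fst x" "b = snd x"
    define c d where "c = s (complex_of_real (1/2)) (a + b)" "d = s (complex_of_real (1/2)) (a - b)"
    define e where "e = s (-\<i>) d"
    have "sP s \<i> (e, e) = (d, - d)" by (simp add: e_def sP_def vs.scale_minus_left)
    hence "(c, c) + sP s \<i> (e, e) = (a, b)" using half_split[of a b] by (simp add: c_d_def)
    hence xe: "x = (c, c) + sP s \<i> (e, e)" by (simp add: a_b_def)
    have "x = P x" using K_P[OF x] by simp
    also have "\<dots> = P (c, c) + sP s \<i> (P (e, e))" by (subst xe) (simp only: P_add P_scale)
    finally have "x = P (c, c) + sP s \<i> (P (e, e))" .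
    thus "x \<in> Pv.span Kx.SA"
      using Pv.span_add[OF Pv.span_base[OF Pdiag_SA] Pv.span_scale[OF Pv.span_base[OF Pdiag_SA]]] by simp
  qed
qed

lemma phi_add_x: "phi (a + b) = phi a + phi b" by (simp add: phi_def P_add[symmetric])
lemma phi_scale_x: "phi (s c a) = sP s c (phi a)"
proof -
  have "(s c a, 0) = sP s c (a, 0)" by (simp add: sP_def)
  thus ?thesis by (simp add: phi_def P_scale)
qed

lemma phiN: "(a, 0) - phi a \<in> NN" unfolding phi_def by (rule PQ)

lemma trm_phi: assumes out: "\<And>k l. \<not> (k < n \<and> l < n) \<Longrightarrow> A k l = 0"
  shows "trm (map_mat phi A) = A + trm (\<lambda>k l. - ((A k l, 0) - phi (A k l)))"
  by (simp add: trm_def fun_eq_iff map_mat_def)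

lemma emb_x: "rc_embedding s UNIV C (sP s) K CVx phi"
  unfolding rc_embedding_def
proof (intro conjI)
  show "linear_on s (sP s) UNIV phi" by (simp add: linear_on_def phi_add_x phi_scale_x)
  show "phi ` UNIV \<subseteq> K" by (auto simp: phi_def P_K)
  show "inj_on phi UNIV"
  proof (rule inj_onI)
    fix a b assume "phi a = phi b"
    hence "phi (a - b) = 0" using phi_add_x[of "a - b" b] by simp
    hence "(a - b, 0) \<in> NN" using phiN[of "a - b"] by simp
    hence "a - b \<in> J" "s \<i> (a - b) \<in> J" by (simp_all add: NN_def)
    hence "a - b = 0" by (rule J_proper)
    thus "a = b" by simp
  qed
  have key: "A \<in> C n \<longleftrightarrow> map_mat phi A \<in> CVx n" if n0: "n > 0" and out: "\<And>k l. \<not> (k < n \<and> l < n) \<Longrightarrow> A k l = 0" for n A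
  proof -
    let ?Nm = "\<lambda>k l. - ((A k l, 0) - phi (A k l))"
    have inN: "?Nm k l \<in> NN" for k l using Pv.subspace_neg[OF NN_sub phiN] by simp
    have outN: "?Nm k l = 0" if "\<not> (k < n \<and> l < n)" for k l using out[OF that] P_0 by (simp add: phi_def zero_prod_def)
    have T1: "trm ?Nm \<in> C n" by (rule Ntr[OF n0 inN outN])
    let ?Nm2 = "\<lambda>k l. - ?Nm k l"
    have inN2: "?Nm2 k l \<in> NN" for k l using Pv.subspace_neg[OF NN_sub inN] by simp
    have outN2: "?Nm2 k l = 0" if "\<not> (k < n \<and> l < n)" for k l using outN[OF that] by simp
    have T2: "trm ?Nm2 \<in> C n" by (rule Ntr[OF n0 inN2 outN2])
    have m: "map_mat phi A \<in> mats n K" using out P_0 by (auto simp: mats_def map_mat_def phi_def P_K zero_prod_def)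
    have e1: "trm (map_mat phi A) = A + trm ?Nm" by (rule trm_phi[OF out])
    have e2: "A = trm (map_mat phi A) + trm ?Nm2" unfolding e1 by (simp add: trm_def fun_eq_iff)
    show ?thesis
    proof
      assume "A \<in> C n"
      from Cadd[OF n0 this T1] have "trm (map_mat phi A) \<in> C n" unfolding e1[symmetric] .
      thus "map_mat phi A \<in> CVx n" using m by (simp add: CVx_def)
    next
      assume "map_mat phi A \<in> CVx n"
      hence "trm (map_mat phi A) \<in> C n" by (simp add: CVx_def)
      from Cadd[OF n0 this T2] show "A \<in> C n" unfolding e2[symmetric] .
    qed
  qed
  show "real_cp C CVx phi"
    unfolding real_cp_def
  proof safe
    fix n A assume n0: "0 < n" and A: "A \<in> C n"
    have "A \<in> mats n UNIV" using Csub[OF n0] A by blast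
    hence out: "\<And>k l. \<not> (k < n \<and> l < n) \<Longrightarrow> A k l = 0" by (simp add: mats_def)
    show "map_mat phi A \<in> CVx n" using key[of n A, OF n0 out] A by blast
  qed
  show "\<forall>n>0. \<forall>A\<in>mats n UNIV. map_mat phi A \<in> CVx n \<longrightarrow> A \<in> C n"
  proof (intro allI impI ballI)
    fix n A assume n0: "0 < n" and "A \<in> mats n UNIV" and M: "map_mat phi A \<in> CVx n"
    hence out: "\<And>k l. \<not> (k < n \<and> l < n) \<Longrightarrow> A k l = 0" by (simp add: mats_def)
    show "A \<in> C n" using key[of n A, OF n0 out] M by blast
  qed
qed

lemma star_add: "star (x + y) = star x + star y" by (simp add: star_def P_add[symmetric])
lemma star_scale: "star (sP s c x) = sP s (cnj c) (star x)"
proof -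
  have "(snd (sP s c x), fst (sP s c x)) = sP s (cnj c) (snd x, fst x)" by (simp add: sP_def)
  thus ?thesis by (simp add: star_def P_scale)
qed

lemma star_SA: "x \<in> Kx.SA \<Longrightarrow> star x = x"
proof -
  assume "x \<in> Kx.SA"
  hence x: "x \<in> K" "s \<i> (fst x - snd x) \<in> J" by (simp_all add: SAx)
  define d where "d = (snd x, fst x) - x"
  have "fst d + snd d = 0" by (simp add: d_def)
  moreover have "fst d - snd d = - ((fst x - snd x) + (fst x - snd x))" by (simp add: d_def algebra_simps)
  hence "s \<i> (fst d - snd d) = - (s \<i> (fst x - snd x) + s \<i> (fst x - snd x))"
    by (simp only: vs.scale_minus_right vs.scale_right_distrib)
  ultimately have "d \<in> NN" using J_zero J_neg[OF J_add[OF x(2) x(2)]] by (simp add: NN_def)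
  hence "P d = 0" by (rule PZ)
  moreover have "(snd x, fst x) = x + d" by (simp add: d_def)
  ultimately show "star x = x" using K_P[OF x(1)] by (simp add: star_def P_add)
qed

lemma star_phi: "star (phi b) = P (0, b)"
proof -
  define n where "n = (b, 0) - phi b"
  have nN: "n \<in> NN" unfolding n_def by (rule phiN)
  have "(snd (phi b), fst (phi b)) = (0, b) - (snd n, fst n)" by (simp add: n_def)
  hence "star (phi b) = P ((0, b) - (snd n, fst n))" by (simp only: star_def)
  hence "star (phi b) = P (0, b) - P (snd n, fst n)" by (simp only: P_diff)
  thus ?thesis using PZ[OF NN_swap[OF nN]] by simp
qed

lemma K_eq: "K = {phi a + star (phi b) | a b. a \<in> UNIV \<and> b \<in> UNIV}"
proof
  show "K \<subseteq> {phi a + star (phi b) | a b. a \<in> UNIV \<and> b \<in> UNIV}"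
  proof
    fix x assume x: "x \<in> K"
    have xe: "x = (fst x, 0) + (0, snd x)" by simp
    have "x = P x" using K_P[OF x] by simp
    also have "\<dots> = P (fst x, 0) + P (0, snd x)" by (subst xe) (simp only: P_add)
    finally have "x = P (fst x, 0) + P (0, snd x)" .
    hence "x = phi (fst x) + star (phi (snd x))" by (simp only: star_phi) (simp add: phi_def)
    thus "x \<in> {phi a + star (phi b) | a b. a \<in> UNIV \<and> b \<in> UNIV}" by blast
  qed
next
  show "{phi a + star (phi b) | a b. a \<in> UNIV \<and> b \<in> UNIV} \<subseteq> K"
  proof
    fix y assume "y \<in> {phi a + star (phi b) | a b. a \<in> UNIV \<and> b \<in> UNIV}"
    then obtain a b where "y = phi a + star (phi b)" by blast
    hence "y = P ((a, 0) + (0, b))" by (simp only: star_phi) (simp only: phi_def P_add)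
    thus "y \<in> K" using P_K by simp
  qed
qed

lemma star_closure_x: "star_closure s UNIV C (sP s) K CVx phi"
  unfolding star_closure_def
proof (intro conjI)
  show "amovs (sP s) K CVx" by (rule amovs_x)
  show "self_adjoint (sP s) K CVx" by (rule selfadj_x)
  show "rc_embedding s UNIV C (sP s) K CVx phi" by (rule emb_x)
  show "\<exists>star. conj_linear_on (sP s) K star \<and> (\<forall>A\<in>sa_part (sP s) CVx 1. star (A 0 0) = A 0 0) \<and>
     K = {phi a + star (phi b) | a b. a \<in> UNIV \<and> b \<in> UNIV}"
  proof (intro exI conjI)
    show "conj_linear_on (sP s) K star" by (simp add: conj_linear_on_def star_add star_scale)
    show "\<forall>A\<in>sa_part (sP s) CVx 1. star (A 0 0) = A 0 0"
    proof
      fix A assume "A \<in> sa_part (sP s) CVx 1"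
      hence "A 0 0 \<in> Kx.SA" unfolding Kx.SA_def by blast
      thus "star (A 0 0) = A 0 0" by (rule star_SA)
    qed
    show "K = {phi a + star (phi b) | a b. a \<in> UNIV \<and> b \<in> UNIV}" by (rule K_eq)
  qed
qed

end

theorem theorem2p9:
  fixes sZ :: "complex \<Rightarrow> 'z::ab_group_add \<Rightarrow> 'z"
    and CZ :: "nat \<Rightarrow> (nat \<Rightarrow> nat \<Rightarrow> 'z) set"
  assumes "amovs sZ UNIV CZ"
  shows "(\<exists>(sV :: complex \<Rightarrow> 'z \<times> 'z \<Rightarrow> 'z \<times> 'z) V CV phi. star_closure sZ UNIV CZ sV V CV phi)
    \<and> (\<forall>(sV :: complex \<Rightarrow> 'v::ab_group_add \<Rightarrow> 'v) V CV phi (sW :: complex \<Rightarrow> 'w::ab_group_add \<Rightarrow> 'w) W CW psi.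
          star_closure sZ UNIV CZ sV V CV phi \<and> star_closure sZ UNIV CZ sW W CW psi \<longrightarrow>
          (\<exists>j. rc_isomorphism sV V CV sW W CW j))"
proof
  interpret Z: amv sZ UNIV CZ using assms by (simp add: amv_def)
  obtain P where P: "Vector_Spaces.linear (sP sZ) (sP sZ) P" "\<forall>x. x - P x \<in> Z.NN" "\<forall>x\<in>Z.NN. P x = 0"
    using Z.exP by blast
  interpret E: exi sZ CZ P using assms P by (simp add: exi_def exi_axioms_def amv_def)
  show "\<exists>(sV :: complex \<Rightarrow> 'z \<times> 'z \<Rightarrow> 'z \<times> 'z) V CV phi. star_closure sZ UNIV CZ sV V CV phi"
    using E.star_closure_x by blast
next
  show "\<forall>(sV :: complex \<Rightarrow> 'v::ab_group_add \<Rightarrow> 'v) V CV phi (sW :: complex \<Rightarrow> 'w::ab_group_add \<Rightarrow> 'w) W CW psi.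
          star_closure sZ UNIV CZ sV V CV phi \<and> star_closure sZ UNIV CZ sW W CW psi \<longrightarrow>
          (\<exists>j. rc_isomorphism sV V CV sW W CW j)"
  proof (intro allI impI)
    fix sV :: "complex \<Rightarrow> 'v::ab_group_add \<Rightarrow> 'v" and V CV phi
      and sW :: "complex \<Rightarrow> 'w::ab_group_add \<Rightarrow> 'w" and W CW psi
    assume H: "star_closure sZ UNIV CZ sV V CV phi \<and> star_closure sZ UNIV CZ sW W CW psi"
    interpret S: sclos2 sZ CZ sV V CV phi sW W CW psi
      using assms H by (simp add: sclos2_def sclos_def sclos_axioms_def amv_def)
    show "\<exists>j. rc_isomorphism sV V CV sW W CW j" using S.iso by blast
  qed
qed

end
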